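(* Let $$G(x,y;u)=1+\sum_{n\ge1}\Bigl(\sum_{\pi\in\mathfrak{S}_n}x^{\mathrm{des}(\pi)}y^{\mathrm{dez}(\pi)}\Bigr)u^n,\qquad F(t,s;u)=1+\sum_{n\geq 2}\Bigl(\sum_{\pi\in\mathcal{D}_n}t^{\mathrm{des}(\pi)}s^{\mathrm{xdes}(\pi)}\Bigr)u^n.$$ Then $$G(x,y;u)=\frac{1}{1-u}\times F\Bigl(\frac{xy}{1-u+xyu},\ \frac{(1-u+xu)(1-u+yu)}{1-u+xyu};\ u\bigl(1+\tfrac{xyu}{1-u}\bigr)\Bigr).$$
   Context: $\mathfrak{S}_n$ is the set of permutations of $[n]=\{1,\dots,n\}$ and $\mathcal{D}_n\subseteq\mathfrak{S}_n$ the set of derangements (no fixed points). For an integer word $w=w_1\cdots w_n$, $\mathrm{des}(w)=|\{i\in[n-1]:w_i>w_{i+1}\}|$. For $\pi\in\mathfrak{S}_n$, $\mathrm{dez}(\pi)=\mathrm{des}(w)$ where $w$ is obtained from $\pi_1\cdots\pi_n$ by replacing each fixed point value $\pi_i=i$ by $-1$ and then replacing every occurrence of the $j$-th smallest positive letter by $j$ for all $j$ (e.g. $\mathrm{dez}(41352)=\mathrm{des}(4\,1\,{-1}\,5\,2)=3$). An index $i$ is a crossing descent of $\pi$ if $\pi_i\ge i+1\ge\pi_{i+1}$, and $\mathrm{xdes}(\pi)$ is their number. *)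

theory Defs
  imports "HOL-Combinatorics.Permutations" "HOL-Computational_Algebra.Formal_Power_Series"
begin

definition perms :: "nat \<Rightarrow> (nat \<Rightarrow> nat) set" where
  "perms n = {\<pi>. \<pi> permutes {1..n}}"

definition derangements :: "nat \<Rightarrow> (nat \<Rightarrow> nat) set" where
  "derangements n = {\<pi> \<in> perms n. \<forall>i\<in>{1..n}. \<pi> i \<noteq> i}"

definition des_word :: "nat \<Rightarrow> (nat \<Rightarrow> int) \<Rightarrow> nat" where
  "des_word n w = card {i \<in> {1..n-1}. w i > w (Suc i)}"

definition des :: "nat \<Rightarrow> (nat \<Rightarrow> nat) \<Rightarrow> nat" where
  "des n \<pi> = des_word n (\<lambda>i. int (\<pi> i))"

text \<open>The word used for dez: fixed-point values replaced by -1, the remaining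
  (positive) letters replaced by their rank among the positive letters.\<close>
definition dez_word :: "nat \<Rightarrow> (nat \<Rightarrow> nat) \<Rightarrow> nat \<Rightarrow> int" where
  "dez_word n \<pi> i = (if \<pi> i = i then -1
     else int (card {v. v \<in> {\<pi> j |j. j \<in> {1..n} \<and> \<pi> j \<noteq> j} \<and> v \<le> \<pi> i}))"

definition dez :: "nat \<Rightarrow> (nat \<Rightarrow> nat) \<Rightarrow> nat" where
  "dez n \<pi> = des_word n (dez_word n \<pi>)"

definition xdes :: "nat \<Rightarrow> (nat \<Rightarrow> nat) \<Rightarrow> nat" where
  "xdes n \<pi> = card {i \<in> {1..n-1}. \<pi> i \<ge> i + 1 \<and> i + 1 \<ge> \<pi> (Suc i)}"

definition G_fps :: "real \<Rightarrow> real \<Rightarrow> real fps" where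
  "G_fps x y = Abs_fps (\<lambda>n. if n = 0 then 1
      else (\<Sum>\<pi>\<in>perms n. x ^ des n \<pi> * y ^ dez n \<pi>))"

definition F_coeff :: "nat \<Rightarrow> 'a::comm_ring_1 \<Rightarrow> 'a \<Rightarrow> 'a" where
  "F_coeff n t s = (if n = 0 then 1 else if n < 2 then 0
      else (\<Sum>\<pi>\<in>derangements n. t ^ des n \<pi> * s ^ xdes n \<pi>))"

text \<open>The formal power series \<Sum>_n a_n w^n for a sequence of power series a_n and
  a power series w with zero constant term (well-defined since w^n has order \<ge> n).\<close>
definition fps_series_subst :: "(nat \<Rightarrow> 'a::comm_ring_1 fps) \<Rightarrow> 'a fps \<Rightarrow> 'a fps" where
  "fps_series_subst a w = Abs_fps (\<lambda>k. \<Sum>n\<le>k. fps_nth (a n * w ^ n) k)"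

definition F_subst :: "real fps \<Rightarrow> real fps \<Rightarrow> real fps \<Rightarrow> real fps" where
  "F_subst t s w = fps_series_subst (\<lambda>n. F_coeff n t s) w"

end

theory Submission
  imports Defs
begin

definition pos :: "nat multiset \<Rightarrow> nat \<Rightarrow> nat" where
  "pos X j = j + (\<Sum>g<j. count X g)"

lemma pos_0[simp]: "pos X 0 = 0" by (simp add: pos_def)
lemma pos_Suc: "pos X (Suc j) = pos X j + 1 + count X j" by (simp add: pos_def)

lemma pos_less: "j < j' \<Longrightarrow> pos X j < pos X j'"
proof (induction j' arbitrary: j)
  case 0 then show ?case by simp
next
  case (Suc j')
  show ?case
  proof (cases "j = j'")
    case True then show ?thesis by (simp add: pos_Suc)
  next
    case False
    then have "pos X j < pos X j'" using Suc by simp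
    then show ?thesis by (simp add: pos_Suc)
  qed
qed

lemma pos_less_iff[simp]: "pos X j < pos X j' \<longleftrightarrow> j < j'"
  by (metis pos_less not_less_iff_gr_or_eq order.asym)
lemma pos_eq_iff[simp]: "pos X j = pos X j' \<longleftrightarrow> j = j'"
  by (metis pos_less nat_neq_iff)
lemma pos_le_iff[simp]: "pos X j \<le> pos X j' \<longleftrightarrow> j \<le> j'"
  by (meson not_le pos_less_iff)
lemma pos_ge: "j \<le> pos X j" by (simp add: pos_def)
lemma inj_pos: "inj (pos X)" by (simp add: inj_on_def)

lemma size_eq_sum_count: "finite A \<Longrightarrow> set_mset X \<subseteq> A \<Longrightarrow> size X = (\<Sum>a\<in>A. count X a)"
proof (induction X)
  case empty then show ?case by simp
next
  case (add x X)
  then have "x \<in> A" by auto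
  have "(\<Sum>a\<in>A. count (add_mset x X) a) = (\<Sum>a\<in>A. count X a + (if a = x then 1 else 0))"
    by (intro sum.cong) auto
  also have "\<dots> = (\<Sum>a\<in>A. count X a) + 1" using add.prems \<open>x\<in>A\<close> by (simp add: sum.distrib)
  finally show ?case using add by auto
qed

lemma pos_last: "set_mset X \<subseteq> {..m} \<Longrightarrow> pos X (Suc m) = Suc m + size X"
  using size_eq_sum_count[of "{..m}" X] by (simp add: pos_def lessThan_Suc_atMost)

lemma pos_between: "pos X j < i \<Longrightarrow> i < pos X (Suc j) \<Longrightarrow> i \<notin> range (pos X)"
  by (auto simp: less_Suc_eq_le)

definition infl :: "nat \<Rightarrow> nat multiset \<Rightarrow> (nat \<Rightarrow> nat) \<Rightarrow> nat \<Rightarrow> nat" where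
  "infl m X \<sigma> i = (if i \<in> pos X ` {1..m} then pos X (\<sigma> (inv_into {1..m} (pos X) i)) else i)"

lemma infl_pos: "j \<in> {1..m} \<Longrightarrow> infl m X \<sigma> (pos X j) = pos X (\<sigma> j)"
  by (simp add: infl_def inv_into_f_f inj_on_def)
lemma infl_other: "i \<notin> pos X ` {1..m} \<Longrightarrow> infl m X \<sigma> i = i"
  by (simp add: infl_def)


lemma card_filter_sum: "finite A \<Longrightarrow> card {i\<in>A. P i} = (\<Sum>i\<in>A. if P i then 1 else (0::nat))"
  by (simp add: sum.inter_filter[symmetric])

lemma sum_split_pos: "(\<Sum>i<pos X n. f i) = (\<Sum>j<n. \<Sum>i\<in>{pos X j..<pos X (Suc j)}. f i)"
proof (induction n)
  case 0 then show ?case by simp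
next
  case (Suc n)
  have "(\<Sum>i<pos X (Suc n). f i) = (\<Sum>i\<in>{0..<pos X n}. f i) + (\<Sum>i\<in>{pos X n..<pos X (Suc n)}. f i)"
    by (subst sum.atLeastLessThan_concat) (auto simp: atLeast0LessThan pos_less)
  then show ?case using Suc by (simp add: atLeast0LessThan)
qed

lemma sum_gap: "(\<Sum>i\<in>{q..<q+1+k}. f i) = f q + (if k = 0 then 0 else (\<Sum>i\<in>{Suc q..<q+k}. f i) + f (q+k))"
proof (cases k)
  case 0 then show ?thesis by simp
next
  case (Suc k')
  have "{q..<q+1+k} = insert q (insert (q+k) {Suc q..<q+k})" using Suc by auto
  then show ?thesis using Suc by (simp add: add_ac)
qed

definition ades :: "nat \<Rightarrow> (nat \<Rightarrow> nat) \<Rightarrow> nat \<Rightarrow> nat \<Rightarrow> nat" where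
  "ades m \<sigma> j k = (if k = 0 then (if 1 \<le> j \<and> j < m \<and> \<sigma> (Suc j) < \<sigma> j then 1 else 0)
     else (if 1 \<le> j \<and> j < \<sigma> j then 1 else 0) + (if j < m \<and> \<sigma> (Suc j) < Suc j then 1 else 0))"

definition adez :: "nat \<Rightarrow> (nat \<Rightarrow> nat) \<Rightarrow> nat \<Rightarrow> nat \<Rightarrow> nat" where
  "adez m \<sigma> j k = (if k = 0 then (if 1 \<le> j \<and> j < m \<and> \<sigma> (Suc j) < \<sigma> j then 1 else 0)
     else (if 1 \<le> j then 1 else 0))"

locale iset =
  fixes m :: nat and X :: "nat multiset" and \<sigma> :: "nat \<Rightarrow> nat"
  assumes Xs: "set_mset X \<subseteq> {..m}" and sp: "\<sigma> permutes {1..m}" and sd: "\<forall>i\<in>{1..m}. \<sigma> i \<noteq> i"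
begin

abbreviation "NN \<equiv> m + size X"
abbreviation "p \<equiv> pos X"
abbreviation "\<pi> \<equiv> infl m X \<sigma>"

lemma \<sigma>_in: "j \<in> {1..m} \<Longrightarrow> \<sigma> j \<in> {1..m}"
  using permutes_in_image[OF sp] by blast

lemma p_last: "p (Suc m) = Suc NN" using pos_last[OF Xs] by simp

lemma p_range: "j \<in> {1..m} \<Longrightarrow> p j \<in> {1..NN}"
proof -
  assume j: "j \<in> {1..m}"
  have "1 \<le> p j" using pos_ge[of j X] j by auto
  moreover have "p j < p (Suc m)" using j by simp
  ultimately show ?thesis using p_last by auto
qed

lemma p_le_N: "j \<le> m \<Longrightarrow> p j \<le> NN"
  using pos_less[of j "Suc m" X] p_last by simp

lemma \<pi>_pos: "j \<in> {1..m} \<Longrightarrow> \<pi> (p j) = p (\<sigma> j)" by (rule infl_pos)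
lemma \<pi>_other: "i \<notin> p ` {1..m} \<Longrightarrow> \<pi> i = i" by (rule infl_other)

lemma \<pi>_image: "\<pi> ` (p ` {1..m}) = p ` {1..m}"
proof -
  have "\<pi> ` (p ` {1..m}) = p ` (\<sigma> ` {1..m})" by (auto simp: image_image \<pi>_pos intro!: image_cong)
  also have "\<sigma> ` {1..m} = {1..m}" using sp by (rule permutes_image)
  finally show ?thesis .
qed

lemma inj_\<pi>: "inj \<pi>"
proof (rule injI)
  fix a b assume ab: "\<pi> a = \<pi> b"
  show "a = b"
  proof (cases "a \<in> p ` {1..m}"; cases "b \<in> p ` {1..m}")
    assume a: "a \<in> p ` {1..m}" and b: "b \<in> p ` {1..m}"
    then obtain i j where i: "i \<in> {1..m}" "a = p i" and j: "j \<in> {1..m}" "b = p j" by auto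
    then have "\<sigma> i = \<sigma> j" using ab \<pi>_pos by simp
    then have "i = j" using sp by (metis permutes_inj injD)
    then show ?thesis using i j by simp
  next
    assume a: "a \<in> p ` {1..m}" and b: "b \<notin> p ` {1..m}"
    then have "\<pi> a \<in> p ` {1..m}" using \<pi>_image by auto
    then show ?thesis using ab b \<pi>_other by simp
  next
    assume a: "a \<notin> p ` {1..m}" and b: "b \<in> p ` {1..m}"
    then have "\<pi> b \<in> p ` {1..m}" using \<pi>_image by auto
    then show ?thesis using ab a \<pi>_other by simp
  next
    assume a: "a \<notin> p ` {1..m}" and b: "b \<notin> p ` {1..m}"
    then show ?thesis using ab \<pi>_other by simp
  qed
qed

lemma \<pi>_perm: "\<pi> permutes {1..NN}"
proof (rule bij_imp_permutes)
  have sub: "p ` {1..m} \<subseteq> {1..NN}" using p_range by auto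
  have "\<pi> ` {1..NN} \<subseteq> {1..NN}"
  proof
    fix y assume "y \<in> \<pi> ` {1..NN}"
    then obtain i where i: "i \<in> {1..NN}" "y = \<pi> i" by auto
    show "y \<in> {1..NN}"
    proof (cases "i \<in> p ` {1..m}")
      case True
      then have "y \<in> \<pi> ` (p ` {1..m})" using i by blast
      then show ?thesis using \<pi>_image sub by blast
    next
      case False then show ?thesis using \<pi>_other i by auto
    qed
  qed
  moreover have ij: "inj_on \<pi> {1..NN}" using inj_on_subset[OF inj_\<pi> subset_UNIV] .
  ultimately have "\<pi> ` {1..NN} = {1..NN}" using endo_inj_surj[of "{1..NN}" \<pi>] by blast
  then show "bij_betw \<pi> {1..NN} {1..NN}" using ij by (simp add: bij_betw_def)
  fix i assume "i \<notin> {1..NN}"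
  then have "i \<notin> p ` {1..m}" using sub by blast
  then show "\<pi> i = i" by (rule \<pi>_other)
qed

lemma \<pi>_nonfix: "{i\<in>{1..NN}. \<pi> i \<noteq> i} = p ` {1..m}"
proof (intro equalityI subsetI)
  fix i assume "i \<in> {i\<in>{1..NN}. \<pi> i \<noteq> i}"
  then show "i \<in> p ` {1..m}" using \<pi>_other by auto
next
  fix i assume "i \<in> p ` {1..m}"
  then obtain j where j: "j \<in> {1..m}" "i = p j" by auto
  then show "i \<in> {i\<in>{1..NN}. \<pi> i \<noteq> i}" using p_range[OF j(1)] \<pi>_pos[OF j(1)] sd by auto
qed

lemma \<pi>_nonfix_vals: "{\<pi> j |j. j \<in> {1..NN} \<and> \<pi> j \<noteq> j} = p ` {1..m}"
proof -
  have "{\<pi> j |j. j \<in> {1..NN} \<and> \<pi> j \<noteq> j} = \<pi> ` {i\<in>{1..NN}. \<pi> i \<noteq> i}" by auto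
  then show ?thesis using \<pi>_nonfix \<pi>_image by simp
qed

lemma dez_pos: "j \<in> {1..m} \<Longrightarrow> dez_word NN \<pi> (p j) = int (\<sigma> j)"
proof -
  assume j: "j \<in> {1..m}"
  have ne: "\<pi> (p j) \<noteq> p j" using \<pi>_pos[OF j] sd j by auto
  have "{v. v \<in> p ` {1..m} \<and> v \<le> p (\<sigma> j)} = p ` {1..\<sigma> j}"
    using \<sigma>_in[OF j] by auto
  moreover have "card (p ` {1..\<sigma> j}) = \<sigma> j" by (simp add: card_image inj_on_def)
  moreover have "dez_word NN \<pi> (p j) = int (card {v. v \<in> p ` {1..m} \<and> v \<le> p (\<sigma> j)})"
    unfolding dez_word_def \<pi>_nonfix_vals using ne \<pi>_pos[OF j] by simp
  ultimately show ?thesis by simp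
qed

lemma dez_other: "i \<notin> p ` {1..m} \<Longrightarrow> dez_word NN \<pi> i = -1"
  by (simp add: dez_word_def \<pi>_other)

end

lemma des_word_sum: "des_word n w = (\<Sum>i<Suc n. if 1 \<le> i \<and> i < n \<and> w (Suc i) < w i then 1 else 0)"
proof -
  have "des_word n w = card {i\<in>{..<Suc n}. 1 \<le> i \<and> i < n \<and> w (Suc i) < w i}"
    unfolding des_word_def by (rule arg_cong[where f=card]) auto
  also have "\<dots> = (\<Sum>i<Suc n. if 1 \<le> i \<and> i < n \<and> w (Suc i) < w i then 1 else 0)"
    by (rule card_filter_sum) simp
  finally show ?thesis .
qed

context iset begin

lemma notin_img: "p j < i \<Longrightarrow> i < p (Suc j) \<Longrightarrow> i \<notin> p ` {1..m}"
  using pos_between[of X j i] by blast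

definition "dd i = (if 1 \<le> i \<and> i < NN \<and> int (\<pi> (Suc i)) < int (\<pi> i) then 1 else (0::nat))"
definition "dz i = (if 1 \<le> i \<and> i < NN \<and> dez_word NN \<pi> (Suc i) < dez_word NN \<pi> i then 1 else (0::nat))"

lemma des_split: "des NN \<pi> = (\<Sum>j\<le>m. \<Sum>i\<in>{p j..<p (Suc j)}. dd i)"
proof -
  have "des NN \<pi> = (\<Sum>i<p (Suc m). dd i)"
    unfolding des_def des_word_sum p_last dd_def by simp
  also have "\<dots> = (\<Sum>j<Suc m. \<Sum>i\<in>{p j..<p (Suc j)}. dd i)" by (rule sum_split_pos)
  finally show ?thesis by (simp add: lessThan_Suc_atMost)
qed

lemma dez_split: "dez NN \<pi> = (\<Sum>j\<le>m. \<Sum>i\<in>{p j..<p (Suc j)}. dz i)"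
proof -
  have "dez NN \<pi> = (\<Sum>i<p (Suc m). dz i)"
    unfolding dez_def des_word_sum p_last dz_def by simp
  also have "\<dots> = (\<Sum>j<Suc m. \<Sum>i\<in>{p j..<p (Suc j)}. dz i)" by (rule sum_split_pos)
  finally show ?thesis by (simp add: lessThan_Suc_atMost)
qed

lemma gap_des: assumes j: "j \<le> m" shows "(\<Sum>i\<in>{p j..<p (Suc j)}. dd i) = ades m \<sigma> j (count X j)"
proof -
  define q where "q = p j"
  define k where "k = count X j"
  have pS: "p (Suc j) = q + 1 + k" by (simp add: q_def k_def pos_Suc)
  have pSle: "p (Suc j) \<le> Suc NN" using p_last j by (metis pos_le_iff Suc_le_mono)
  have first: "dd q = (if 1 \<le> j then (if k = 0 then (if j < m \<and> \<sigma> (Suc j) < \<sigma> j then 1 else 0)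
                 else (if j < \<sigma> j then 1 else 0)) else 0)"
  proof (cases "j = 0")
    case True then show ?thesis by (simp add: q_def dd_def)
  next
    case False
    then have j1: "j \<in> {1..m}" using j by auto
    have \<pi>q: "\<pi> q = p (\<sigma> j)" using \<pi>_pos[OF j1] q_def by simp
    show ?thesis
    proof (cases "k = 0")
      case True
      show ?thesis
      proof (cases "j < m")
        case jm: True
        then have j2: "Suc j \<in> {1..m}" by auto
        have "\<pi> (Suc q) = p (\<sigma> (Suc j))" using \<pi>_pos[OF j2] pS True by simp
        moreover have "q < NN" using p_le_N[of "Suc j"] jm pS True by simp
        moreover have "1 \<le> q" using pos_ge[of j X] False q_def by simp
        ultimately show ?thesis using True False jm \<pi>q by (simp add: dd_def)
      next
        case jm: False
        then have "j = m" using j by simp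
        then have "q = NN" using pS p_last True by simp
        then show ?thesis using jm True False by (simp add: dd_def)
      qed
    next
      case kF: False
      have ni: "Suc q \<notin> p ` {1..m}" using notin_img[of j "Suc q"] pS kF q_def by simp
      then have "\<pi> (Suc q) = Suc q" by (rule \<pi>_other)
      moreover have "q < NN" using pS pSle kF by simp
      moreover have "1 \<le> q" using pos_ge[of j X] False q_def by simp
      moreover have "p (\<sigma> j) \<noteq> Suc q" using ni \<sigma>_in[OF j1] by (metis image_eqI)
      moreover have "q < p (\<sigma> j) \<longleftrightarrow> j < \<sigma> j" using q_def by simp
      ultimately show ?thesis using kF False \<pi>q by (auto simp: dd_def)
    qed
  qed
  have mid: "(\<Sum>i\<in>{Suc q..<q+k}. dd i) = 0"
  proof (intro sum.neutral ballI)
    fix i assume i: "i \<in> {Suc q..<q+k}"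
    have "i \<notin> p ` {1..m}" using notin_img[of j i] i pS q_def by simp
    moreover have "Suc i \<notin> p ` {1..m}" using notin_img[of j "Suc i"] i pS q_def by simp
    ultimately show "dd i = 0" by (simp add: dd_def \<pi>_other)
  qed
  have last: "k \<noteq> 0 \<Longrightarrow> dd (q + k) = (if j < m \<and> \<sigma> (Suc j) < Suc j then 1 else 0)"
  proof -
    assume kF: "k \<noteq> 0"
    have ni: "q + k \<notin> p ` {1..m}" using notin_img[of j "q+k"] pS kF q_def by simp
    then have \<pi>i: "\<pi> (q + k) = q + k" by (rule \<pi>_other)
    show ?thesis
    proof (cases "j < m")
      case jm: True
      then have j2: "Suc j \<in> {1..m}" by auto
      have "\<pi> (Suc (q + k)) = p (\<sigma> (Suc j))" using \<pi>_pos[OF j2] pS by simp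
      moreover have "q + k < NN" using p_le_N[of "Suc j"] jm pS by simp
      moreover have "1 \<le> q + k" using kF by simp
      moreover have "p (\<sigma> (Suc j)) \<noteq> q + k" using ni \<sigma>_in[OF j2] by (metis image_eqI)
      moreover have "p (\<sigma> (Suc j)) < Suc (q + k) \<longleftrightarrow> \<sigma> (Suc j) < Suc j" using pS
        by (metis add_Suc_right pos_less_iff add.commute plus_1_eq_Suc add.assoc)
      ultimately show ?thesis using jm \<pi>i by (auto simp: dd_def)
    next
      case jm: False
      then have "j = m" using j by simp
      then have "q + k = NN" using pS p_last by simp
      then show ?thesis using jm by (simp add: dd_def)
    qed
  qed
  have "(\<Sum>i\<in>{p j..<p (Suc j)}. dd i) = (\<Sum>i\<in>{q..<q+1+k}. dd i)" using pS q_def by simp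
  also have "\<dots> = dd q + (if k = 0 then 0 else (\<Sum>i\<in>{Suc q..<q+k}. dd i) + dd (q+k))" by (rule sum_gap)
  also have "\<dots> = ades m \<sigma> j k"
  proof (cases "k = 0")
    case True then show ?thesis using first by (simp add: ades_def)
  next
    case False then show ?thesis using first mid last[OF False] by (simp add: ades_def)
  qed
  finally show ?thesis by (simp add: k_def)
qed

lemma dez_ge: "dez_word n f i \<ge> -1" by (simp add: dez_word_def)

lemma gap_dez: assumes j: "j \<le> m" shows "(\<Sum>i\<in>{p j..<p (Suc j)}. dz i) = adez m \<sigma> j (count X j)"
proof -
  define q where "q = p j"
  define k where "k = count X j"
  have pS: "p (Suc j) = q + 1 + k" by (simp add: q_def k_def pos_Suc)
  have pSle: "p (Suc j) \<le> Suc NN" using p_last j by (metis pos_le_iff Suc_le_mono)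
  have first: "dz q = (if 1 \<le> j then (if k = 0 then (if j < m \<and> \<sigma> (Suc j) < \<sigma> j then 1 else 0)
                 else 1) else 0)"
  proof (cases "j = 0")
    case True then show ?thesis by (simp add: q_def dz_def)
  next
    case False
    then have j1: "j \<in> {1..m}" using j by auto
    have dq: "dez_word NN \<pi> q = int (\<sigma> j)" using dez_pos[OF j1] q_def by simp
    show ?thesis
    proof (cases "k = 0")
      case True
      show ?thesis
      proof (cases "j < m")
        case jm: True
        then have j2: "Suc j \<in> {1..m}" by auto
        have "dez_word NN \<pi> (Suc q) = int (\<sigma> (Suc j))" using dez_pos[OF j2] pS True by simp
        moreover have "q < NN" using p_le_N[of "Suc j"] jm pS True by simp
        moreover have "1 \<le> q" using pos_ge[of j X] False q_def by simp
        ultimately show ?thesis using True False jm dq by (simp add: dz_def)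
      next
        case jm: False
        then have "j = m" using j by simp
        then have "q = NN" using pS p_last True by simp
        then show ?thesis using jm True False by (simp add: dz_def)
      qed
    next
      case kF: False
      have ni: "Suc q \<notin> p ` {1..m}" using notin_img[of j "Suc q"] pS kF q_def by simp
      then have "dez_word NN \<pi> (Suc q) = -1" by (rule dez_other)
      moreover have "q < NN" using pS pSle kF by simp
      moreover have "1 \<le> q" using pos_ge[of j X] False q_def by simp
      ultimately show ?thesis using kF False dq by (auto simp: dz_def)
    qed
  qed
  have mid: "(\<Sum>i\<in>{Suc q..<q+k}. dz i) = 0"
  proof (intro sum.neutral ballI)
    fix i assume i: "i \<in> {Suc q..<q+k}"
    have "i \<notin> p ` {1..m}" using notin_img[of j i] i pS q_def by simp
    moreover have "Suc i \<notin> p ` {1..m}" using notin_img[of j "Suc i"] i pS q_def by simp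
    ultimately show "dz i = 0" by (simp add: dz_def dez_other)
  qed
  have last: "k \<noteq> 0 \<Longrightarrow> dz (q + k) = 0"
  proof -
    assume kF: "k \<noteq> 0"
    have ni: "q + k \<notin> p ` {1..m}" using notin_img[of j "q+k"] pS kF q_def by simp
    then have "dez_word NN \<pi> (q + k) = -1" by (rule dez_other)
    then show ?thesis using dez_ge[of NN \<pi> "Suc (q+k)"] by (simp add: dz_def)
  qed
  have "(\<Sum>i\<in>{p j..<p (Suc j)}. dz i) = (\<Sum>i\<in>{q..<q+1+k}. dz i)" using pS q_def by simp
  also have "\<dots> = dz q + (if k = 0 then 0 else (\<Sum>i\<in>{Suc q..<q+k}. dz i) + dz (q+k))" by (rule sum_gap)
  also have "\<dots> = adez m \<sigma> j k"
  proof (cases "k = 0")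
    case True then show ?thesis using first by (simp add: adez_def)
  next
    case False then show ?thesis using first mid last[OF False] by (simp add: adez_def)
  qed
  finally show ?thesis by (simp add: k_def)
qed

lemma weight:
  fixes x y :: real
  shows "x ^ des NN \<pi> * y ^ dez NN \<pi> = (\<Prod>j\<le>m. x ^ ades m \<sigma> j (count X j) * y ^ adez m \<sigma> j (count X j))"
proof -
  have "des NN \<pi> = (\<Sum>j\<le>m. ades m \<sigma> j (count X j))" unfolding des_split using gap_des by simp
  moreover have "dez NN \<pi> = (\<Sum>j\<le>m. adez m \<sigma> j (count X j))" unfolding dez_split using gap_dez by simp
  ultimately show ?thesis by (simp add: power_sum prod.distrib)
qed

end

lemma strict_mono_pos: "strict_mono (pos X)" by (simp add: strict_mono_def)

lemma sorted_map_sm: "strict_mono f \<Longrightarrow> sorted (map (f::nat\<Rightarrow>nat) [a..<b])"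
  by (simp add: sorted_map strict_mono_less_eq sorted_wrt_mono_rel[OF _ sorted_upt])

lemma pos_unique:
  assumes eq: "pos X ` {1..m} = pos Y ` {1..m}" and j: "j \<in> {1..m}"
  shows "pos X j = pos Y j"
proof -
  have s: "sorted (map (pos Z) [1..<Suc m])" for Z
    using sorted_map_sm[OF strict_mono_pos] .
  have d: "distinct (map (pos Z) [1..<Suc m])" for Z
    by (simp add: distinct_map inj_on_def)
  have "set (map (pos X) [1..<Suc m]) = set (map (pos Y) [1..<Suc m])"
    by (simp only: set_map set_upt atLeastLessThanSuc_atLeastAtMost eq)
  then have "map (pos X) [1..<Suc m] = map (pos Y) [1..<Suc m]"
    using sorted_distinct_set_unique s d by blast
  then have "\<forall>x\<in>set [1..<Suc m]. pos X x = pos Y x" by (simp only: map_eq_conv)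
  moreover have "j \<in> set [1..<Suc m]" using j by (simp only: set_upt atLeastLessThanSuc_atLeastAtMost)
  ultimately show ?thesis by blast
qed

lemma pos_determines:
  assumes eq: "\<forall>j\<in>{1..m}. pos X j = pos Y j" and X: "set_mset X \<subseteq> {..m}" and Y: "set_mset Y \<subseteq> {..m}"
    and sz: "size X = size Y"
  shows "X = Y"
proof -
  have lt: "count X g = count Y g" if g: "g < m" for g
  proof -
    have "pos X (Suc g) = pos Y (Suc g)" using eq g by auto
    moreover have "pos X g = pos Y g" using eq g by (cases g) auto
    ultimately show ?thesis by (simp add: pos_Suc)
  qed
  have "size X = (\<Sum>g<m. count X g) + count X m"
    using size_eq_sum_count[OF _ X] by (simp add: lessThan_Suc_atMost[symmetric])
  moreover have "size Y = (\<Sum>g<m. count Y g) + count Y m"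
    using size_eq_sum_count[OF _ Y] by (simp add: lessThan_Suc_atMost[symmetric])
  moreover have "(\<Sum>g<m. count X g) = (\<Sum>g<m. count Y g)" using lt by simp
  ultimately have "count X m = count Y m" using sz by simp
  have "count X g = count Y g" for g
  proof (cases "g \<le> m")
    case True then show ?thesis using lt \<open>count X m = count Y m\<close> by (cases "g = m") auto
  next
    case False
    then have "count X g = 0" "count Y g = 0" using X Y by (auto simp: count_eq_zero_iff)
    then show ?thesis by simp
  qed
  then show ?thesis by (simp add: multiset_eqI)
qed

lemma exist_X: "S \<subseteq> {1..N} \<Longrightarrow> \<exists>X. set_mset X \<subseteq> {..card S} \<and> size X = N - card S \<and> pos X ` {1..card S} = S"
proof (induction N arbitrary: S)
  case 0 then have "S = {}" by auto
  then show ?case by (intro exI[of _ "{#}"]) simp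
next
  case (Suc N)
  show ?case
  proof (cases "Suc N \<in> S")
    case False
    then have sub: "S \<subseteq> {1..N}" using Suc.prems by (auto simp: le_Suc_eq)
    then have cS: "card S \<le> N" using card_mono[OF _ sub] by simp
    obtain X where X: "set_mset X \<subseteq> {..card S}" "size X = N - card S" "pos X ` {1..card S} = S"
      using Suc.IH[OF sub] by blast
    define X' where "X' = add_mset (card S) X"
    have "pos X' j = pos X j" if "j \<le> card S" for j
      unfolding pos_def X'_def using that by (intro arg_cong2[where f="(+)"] refl sum.cong) auto
    then have "pos X' ` {1..card S} = S" using X(3) by (auto simp: image_def)
    moreover have "set_mset X' \<subseteq> {..card S}" using X(1) by (simp add: X'_def)
    moreover have "size X' = Suc N - card S" using X(2) cS by (simp add: X'_def)
    ultimately show ?thesis by blast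
  next
    case True
    define S' where "S' = S - {Suc N}"
    have sub: "S' \<subseteq> {1..N}" using Suc.prems by (auto simp: S'_def le_Suc_eq)
    then have cS': "card S' \<le> N" using card_mono[OF _ sub] by simp
    have fin: "finite S" using Suc.prems finite_subset by blast
    have cS: "card S = Suc (card S')" using card_Suc_Diff1[OF fin True] by (simp add: S'_def)
    obtain X where X: "set_mset X \<subseteq> {..card S'}" "size X = N - card S'" "pos X ` {1..card S'} = S'"
      using Suc.IH[OF sub] by blast
    have last: "pos X (card S) = Suc N" using pos_last[OF X(1)] X(2) cS cS' by simp
    have "{1..card S} = insert (card S) {1..card S'}" using cS by auto
    then have "pos X ` {1..card S} = S" using X(3) last True by (auto simp: S'_def)
    moreover have "set_mset X \<subseteq> {..card S}" using X(1) cS by auto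
    moreover have "size X = Suc N - card S" using X(2) cS by simp
    ultimately show ?thesis by blast
  qed
qed


definition Dom :: "nat \<Rightarrow> (nat \<times> (nat \<Rightarrow> nat) \<times> nat multiset) set" where
  "Dom N = (SIGMA m:{..N}. SIGMA \<sigma>:derangements m. multisets_of_size {..m} (N - m))"

definition Phi :: "nat \<times> (nat \<Rightarrow> nat) \<times> nat multiset \<Rightarrow> nat \<Rightarrow> nat" where
  "Phi t = (case t of (m, \<sigma>, X) \<Rightarrow> infl m X \<sigma>)"

lemma Dom_iset: "(m, \<sigma>, X) \<in> Dom N \<Longrightarrow> iset m X \<sigma> \<and> m + size X = N"
  by (auto simp: Dom_def derangements_def perms_def multisets_of_size_def iset_def)

lemma Phi_in: "t \<in> Dom N \<Longrightarrow> Phi t \<in> perms N"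
proof -
  assume t: "t \<in> Dom N"
  obtain m \<sigma> X where tt: "t = (m, \<sigma>, X)" by (cases t) auto
  then have "iset m X \<sigma>" "m + size X = N" using Dom_iset t by auto
  then show ?thesis using iset.\<pi>_perm by (fastforce simp: Phi_def tt perms_def)
qed

lemma Phi_inj: "inj_on Phi (Dom N)"
proof (rule inj_onI)
  fix t t' assume t: "t \<in> Dom N" and t': "t' \<in> Dom N" and eq: "Phi t = Phi t'"
  obtain m \<sigma> X where tt: "t = (m, \<sigma>, X)" by (cases t) auto
  obtain m' \<sigma>' X' where tt': "t' = (m', \<sigma>', X')" by (cases t') auto
  have I: "iset m X \<sigma>" "m + size X = N" using Dom_iset t tt by auto
  have I': "iset m' X' \<sigma>'" "m' + size X' = N" using Dom_iset t' tt' by auto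
  have e: "infl m X \<sigma> = infl m' X' \<sigma>'" using eq by (simp add: Phi_def tt tt')
  have "pos X ` {1..m} = pos X' ` {1..m'}"
    using iset.\<pi>_nonfix[OF I(1)] iset.\<pi>_nonfix[OF I'(1)] e I(2) I'(2) by simp
  moreover have "card (pos X ` {1..m}) = m" for X m by (simp add: card_image inj_on_def)
  ultimately have mm: "m = m'" by metis
  have pe: "pos X ` {1..m} = pos X' ` {1..m}" using \<open>pos X ` {1..m} = pos X' ` {1..m'}\<close> mm by simp
  have XX: "X = X'"
    using pos_determines[of m X X'] pos_unique[OF pe] I I' mm by (auto simp: iset_def)
  have "\<sigma> j = \<sigma>' j" for j
  proof (cases "j \<in> {1..m}")
    case True
    have "pos X (\<sigma> j) = pos X (\<sigma>' j)"
      using infl_pos[OF True, of X \<sigma>] infl_pos[OF True, of X \<sigma>'] e XX mm by simp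
    then show ?thesis by simp
  next
    case False
    then show ?thesis using I(1) I'(1) mm by (simp add: iset_def permutes_def)
  qed
  then show "t = t'" using tt tt' mm XX by auto
qed


lemma Phi_surj: "\<pi> \<in> perms N \<Longrightarrow> \<pi> \<in> Phi ` Dom N"
proof -
  assume "\<pi> \<in> perms N"
  then have pp: "\<pi> permutes {1..N}" by (simp add: perms_def)
  define S where "S = {i\<in>{1..N}. \<pi> i \<noteq> i}"
  define m where "m = card S"
  have Ssub: "S \<subseteq> {1..N}" by (auto simp: S_def)
  have mN: "m \<le> N" using card_mono[OF _ Ssub] by (simp add: m_def)
  obtain X where X: "set_mset X \<subseteq> {..m}" "size X = N - m" "pos X ` {1..m} = S"
    using exist_X[OF Ssub] unfolding m_def by blast
  have injpi: "inj \<pi>" using permutes_inj[OF pp] .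
  have piS: "\<pi> ` S \<subseteq> S"
  proof
    fix v assume "v \<in> \<pi> ` S"
    then obtain i where i: "i \<in> S" "v = \<pi> i" by auto
    have "i \<in> {1..N}" using i Ssub by blast
    then have "\<pi> i \<in> {1..N}" using permutes_in_image[OF pp] by simp
    moreover have "\<pi> (\<pi> i) \<noteq> \<pi> i" using i injpi by (auto simp: S_def dest: injD)
    ultimately show "v \<in> S" using i by (simp add: S_def)
  qed
  have finS: "finite S" using Ssub finite_subset by blast
  have piS2: "\<pi> ` S = S" using endo_inj_surj[OF finS piS inj_on_subset[OF injpi subset_UNIV]] .
  have bp: "bij_betw (pos X) {1..m} S" using X(3) by (simp add: bij_betw_def inj_on_def)
  have bpi: "bij_betw \<pi> S S" using piS2 inj_on_subset[OF injpi subset_UNIV] by (simp add: bij_betw_def)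
  have bi: "bij_betw (inv_into {1..m} (pos X)) S {1..m}" using bij_betw_inv_into[OF bp] .
  define \<sigma> where "\<sigma> j = (if j \<in> {1..m} then inv_into {1..m} (pos X) (\<pi> (pos X j)) else j)" for j
  have "bij_betw (inv_into {1..m} (pos X) \<circ> (\<pi> \<circ> pos X)) {1..m} {1..m}"
    using bij_betw_trans[OF bij_betw_trans[OF bp bpi] bi] .
  moreover have "bij_betw \<sigma> {1..m} {1..m} = bij_betw (inv_into {1..m} (pos X) \<circ> (\<pi> \<circ> pos X)) {1..m} {1..m}"
    by (rule bij_betw_cong) (simp add: \<sigma>_def)
  ultimately have "bij_betw \<sigma> {1..m} {1..m}" by simp
  then have sp: "\<sigma> permutes {1..m}" by (rule bij_imp_permutes) (auto simp: \<sigma>_def)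
  have inS: "\<pi> (pos X j) \<in> pos X ` {1..m}" if j: "j \<in> {1..m}" for j
  proof -
    have "pos X j \<in> S" using X(3) j by blast
    then have "\<pi> (pos X j) \<in> \<pi> ` S" by (rule imageI)
    then show ?thesis using piS2 X(3) by simp
  qed
  have sd: "\<forall>i\<in>{1..m}. \<sigma> i \<noteq> i"
  proof
    fix i assume i: "i \<in> {1..m}"
    show "\<sigma> i \<noteq> i"
    proof
      assume "\<sigma> i = i"
      then have "pos X (\<sigma> i) = pos X i" by simp
      moreover have "pos X (\<sigma> i) = \<pi> (pos X i)" using i inS[OF i] by (simp add: \<sigma>_def f_inv_into_f)
      moreover have "pos X i \<in> S" using X(3) i by blast
      ultimately show False by (simp add: S_def)
    qed
  qed
  have "infl m X \<sigma> = \<pi>"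
  proof
    fix i show "infl m X \<sigma> i = \<pi> i"
    proof (cases "i \<in> pos X ` {1..m}")
      case True
      then obtain j where j: "j \<in> {1..m}" "i = pos X j" by auto
      then show ?thesis using infl_pos[OF j(1)] inS[OF j(1)] by (simp add: \<sigma>_def f_inv_into_f)
    next
      case False
      then have "i \<notin> S" using X(3) by simp
      then have "\<pi> i = i" using pp by (auto simp: S_def permutes_def)
      then show ?thesis using False infl_other by simp
    qed
  qed
  then have "Phi (m, \<sigma>, X) = \<pi>" by (simp add: Phi_def)
  moreover have "(m, \<sigma>, X) \<in> Dom N"
    unfolding Dom_def derangements_def perms_def multisets_of_size_def using mN X sp sd by simp
  ultimately show ?thesis by (metis image_eqI)
qed

lemma Phi_bij: "bij_betw Phi (Dom N) (perms N)"
  unfolding bij_betw_def using Phi_inj Phi_in Phi_surj by blast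


lemma transitions:
  fixes E :: "nat \<Rightarrow> bool"
  assumes "n \<ge> 1"
  shows "card {j\<in>{1..<n}. E j \<and> \<not> E (Suc j)} + (if E n then 1 else 0)
       = card {j\<in>{1..<n}. \<not> E j \<and> E (Suc j)} + (if E 1 then 1 else 0)"
  using assms
proof (induction n rule: dec_induct)
  case base then show ?case by simp
next
  case (step n)
  have s1: "{j\<in>{1..<Suc n}. E j \<and> \<not> E (Suc j)} =
            (if E n \<and> \<not> E (Suc n) then insert n else id) {j\<in>{1..<n}. E j \<and> \<not> E (Suc j)}"
    using step.hyps by (auto simp: less_Suc_eq)
  have s2: "{j\<in>{1..<Suc n}. \<not> E j \<and> E (Suc j)} =
            (if \<not> E n \<and> E (Suc n) then insert n else id) {j\<in>{1..<n}. \<not> E j \<and> E (Suc j)}"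
    using step.hyps by (auto simp: less_Suc_eq)
  show ?case using step.IH unfolding s1 s2 by (cases "E n"; cases "E (Suc n)") auto
qed

definition gf :: "real \<Rightarrow> real \<Rightarrow> real fps" where
  "gf a b = Abs_fps (\<lambda>k. if k = 0 then a else b)"

abbreviation "II \<equiv> inverse (1 - fps_X :: real fps)"

lemma II_eq: "II = Abs_fps (\<lambda>n. 1)" by (rule fps_inverse_one_minus_fps_X)

lemma one_minus_II: "(1 - fps_X) * II = 1"
  by (rule inverse_mult_eq_1') simp

lemma gf_eq: "gf a b = fps_const a + fps_const b * fps_X * II"
  by (rule fps_ext) (simp add: gf_def II_eq fps_X_mult_nth mult.assoc)

lemma const_gf: "fps_const c * gf a b = gf (c * a) (c * b)"
  by (rule fps_ext) (simp add: gf_def)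

lemma lin_II: "(1 - fps_X + fps_const a * fps_X) * II = gf 1 a"
proof -
  have "(1 - fps_X + fps_const a * fps_X) * II = (1 - fps_X) * II + fps_const a * fps_X * II"
    by (simp add: algebra_simps)
  also have "\<dots> = gf 1 a" using one_minus_II by (simp add: gf_eq)
  finally show ?thesis .
qed

lemma II_gf: "II = gf 1 1" using lin_II[of 1] by simp

lemma const_II: "fps_const c * II = gf c c" using const_gf[of c 1 1] by (simp add: II_gf)

definition "Lx a \<equiv> (1 - fps_X + fps_const a * fps_X :: real fps)"

lemma local_factor:
  fixes x y :: real and a b j :: nat
  assumes "a \<noteq> j" "b \<noteq> Suc j"
  defines "ds \<equiv> b < a" and "cr \<equiv> j < a \<and> b < Suc j" and "z \<equiv> a < j \<and> Suc j < b"
  shows "gf ((x*y) ^ (if ds then 1 else 0)) (x ^ ((if j < a then 1 else 0) + (if b < Suc j then 1 else 0)) * y)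
       = fps_const (x*y) ^ (if ds then 1 else 0) * Lx x ^ (if cr then 1 else 0) * Lx y ^ (if z then 1 else 0)
         * Lx (x*y) ^ (if \<not> ds \<and> \<not> z then 1 else 0) * II"
proof -
  have l: "Lx c * II = gf 1 c" for c by (simp add: Lx_def lin_II)
  show ?thesis
  proof (cases "b < a")
    case True
    then show ?thesis using assms
      by (cases "j < a"; cases "b < Suc j"; simp add: ds_def cr_def z_def mult.assoc l const_gf const_II; simp add: mult_ac power2_eq_square)
  next
    case False
    then show ?thesis using assms
      by (cases "j < a"; cases "b < Suc j"; simp add: ds_def cr_def z_def mult.assoc l const_gf const_II; simp add: mult_ac power2_eq_square)
  qed
qed


definition fj :: "real \<Rightarrow> real \<Rightarrow> nat \<Rightarrow> (nat \<Rightarrow> nat) \<Rightarrow> nat \<Rightarrow> real fps" where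
  "fj x y m \<sigma> j = Abs_fps (\<lambda>k. x ^ ades m \<sigma> j k * y ^ adez m \<sigma> j k)"

lemma fj_gf: "fj x y m \<sigma> j = gf (x ^ ades m \<sigma> j 0 * y ^ adez m \<sigma> j 0) (x ^ ades m \<sigma> j 1 * y ^ adez m \<sigma> j 1)"
  by (rule fps_ext) (simp add: fj_def gf_def ades_def adez_def)

lemma sum_ind: "finite A \<Longrightarrow> (\<Sum>j\<in>A. if P j then 1 else (0::nat)) = card {j\<in>A. P j}"
  by (simp add: card_filter_sum)

lemma prod_fj:
  fixes x y :: real
  assumes \<sigma>: "\<sigma> \<in> derangements m" and m1: "m \<ge> 1"
  shows "(\<Prod>j\<le>m. fj x y m \<sigma> j) = fps_const (x*y) ^ des m \<sigma> * Lx x ^ xdes m \<sigma> * Lx y ^ xdes m \<sigma>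
            * Lx (x*y) ^ (m - des m \<sigma> - xdes m \<sigma>) * II ^ (m+1)"
    and "des m \<sigma> + xdes m \<sigma> \<le> m"
proof -
  have sp: "\<sigma> permutes {1..m}" and sd: "\<forall>i\<in>{1..m}. \<sigma> i \<noteq> i" using \<sigma> by (auto simp: derangements_def perms_def)
  have sin: "i \<in> {1..m} \<Longrightarrow> \<sigma> i \<in> {1..m}" for i using permutes_in_image[OF sp] by blast
  define F where "F = fps_const (x*y)"
  define ds where "ds j = (\<sigma> (Suc j) < \<sigma> j)" for j
  define cr where "cr j = (j < \<sigma> j \<and> \<sigma> (Suc j) < Suc j)" for j
  define z where "z j = (\<sigma> j < j \<and> Suc j < \<sigma> (Suc j))" for j
  define ind :: "bool \<Rightarrow> nat" where "ind b = (if b then 1 else 0)" for b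
  have mid: "fj x y m \<sigma> j = F ^ ind (ds j) * Lx x ^ ind (cr j) * Lx y ^ ind (z j)
         * Lx (x*y) ^ ind (\<not> ds j \<and> \<not> z j) * II" if j: "j \<in> {1..<m}" for j
  proof -
    have a: "\<sigma> j \<noteq> j" "\<sigma> (Suc j) \<noteq> Suc j" using sd j by auto
    have e0: "x ^ ades m \<sigma> j 0 * y ^ adez m \<sigma> j 0 = (x*y) ^ (if ds j then 1 else 0)"
      using j by (simp add: ades_def adez_def ds_def)
    have e1: "x ^ ades m \<sigma> j 1 * y ^ adez m \<sigma> j 1 =
        x ^ ((if j < \<sigma> j then 1 else 0) + (if \<sigma> (Suc j) < Suc j then 1 else 0)) * y"
      using j by (simp add: ades_def adez_def)
    show ?thesis unfolding fj_gf e0 e1 F_def ind_def ds_def cr_def z_def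
      by (rule local_factor[OF a])
  qed
  have f0: "fj x y m \<sigma> 0 = II"
  proof -
    have "\<sigma> 1 \<ge> 1" using sin[of 1] m1 by simp
    then show ?thesis by (simp add: fj_gf ades_def adez_def II_gf)
  qed
  have fm: "fj x y m \<sigma> m = Lx y * II"
  proof -
    have "\<sigma> m \<le> m" using sin[of m] m1 by simp
    then show ?thesis using m1 by (simp add: fj_gf ades_def adez_def Lx_def lin_II)
  qed
  have split: "{..m} = insert 0 (insert m {1..<m})" using m1 by auto
  have "(\<Prod>j\<le>m. fj x y m \<sigma> j) = fj x y m \<sigma> 0 * (fj x y m \<sigma> m * (\<Prod>j\<in>{1..<m}. fj x y m \<sigma> j))"
    unfolding split using m1 by simp
  also have "(\<Prod>j\<in>{1..<m}. fj x y m \<sigma> j) = (\<Prod>j\<in>{1..<m}. F ^ ind (ds j) * Lx x ^ ind (cr j) * Lx y ^ ind (z j)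
         * Lx (x*y) ^ ind (\<not> ds j \<and> \<not> z j) * II)"
    using mid by (rule prod.cong[OF refl])
  also have "\<dots> = F ^ (\<Sum>j\<in>{1..<m}. ind (ds j)) * Lx x ^ (\<Sum>j\<in>{1..<m}. ind (cr j)) * Lx y ^ (\<Sum>j\<in>{1..<m}. ind (z j))
         * Lx (x*y) ^ (\<Sum>j\<in>{1..<m}. ind (\<not> ds j \<and> \<not> z j)) * II ^ (m - 1)"
    by (simp add: prod.distrib power_sum)
  finally have P: "(\<Prod>j\<le>m. fj x y m \<sigma> j) = II * (Lx y * II * (F ^ (\<Sum>j\<in>{1..<m}. ind (ds j)) * Lx x ^ (\<Sum>j\<in>{1..<m}. ind (cr j)) * Lx y ^ (\<Sum>j\<in>{1..<m}. ind (z j))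
         * Lx (x*y) ^ (\<Sum>j\<in>{1..<m}. ind (\<not> ds j \<and> \<not> z j)) * II ^ (m - 1)))"
    using f0 fm by simp
  have sd1: "(\<Sum>j\<in>{1..<m}. ind (ds j)) = des m \<sigma>"
  proof -
    have "{1..m-1} = {1..<m}" using m1 by auto
    then show ?thesis unfolding des_def des_word_def ind_def ds_def by (simp add: sum_ind)
  qed
  have sd2: "(\<Sum>j\<in>{1..<m}. ind (cr j)) = xdes m \<sigma>"
  proof -
    have "{i \<in> {1..m-1}. \<sigma> i \<ge> i + 1 \<and> i + 1 \<ge> \<sigma> (Suc i)} = {j\<in>{1..<m}. cr j}"
    proof (intro equalityI subsetI)
      fix i assume "i \<in> {i \<in> {1..m-1}. \<sigma> i \<ge> i + 1 \<and> i + 1 \<ge> \<sigma> (Suc i)}"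
      moreover then have "\<sigma> (Suc i) \<noteq> Suc i" using sd by auto
      ultimately show "i \<in> {j\<in>{1..<m}. cr j}" using m1 by (auto simp: cr_def)
    next
      fix i assume "i \<in> {j\<in>{1..<m}. cr j}"
      then show "i \<in> {i \<in> {1..m-1}. \<sigma> i \<ge> i + 1 \<and> i + 1 \<ge> \<sigma> (Suc i)}" by (auto simp: cr_def)
    qed
    then show ?thesis unfolding xdes_def ind_def by (simp add: sum_ind)
  qed
  define E where "E j = (j < \<sigma> j)" for j
  have tr: "card {j\<in>{1..<m}. E j \<and> \<not> E (Suc j)} + (if E m then 1 else 0)
       = card {j\<in>{1..<m}. \<not> E j \<and> E (Suc j)} + (if E 1 then 1 else 0)" by (rule transitions[OF m1])
  have "\<sigma> 1 \<in> {1..m}" using sin m1 by simp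
  moreover have "\<sigma> 1 \<noteq> 1" using sd m1 by simp
  ultimately have "E 1" by (simp add: E_def)
  moreover have "\<not> E m" using sin[of m] m1 by (simp add: E_def)
  moreover have "{j\<in>{1..<m}. E j \<and> \<not> E (Suc j)} = {j\<in>{1..<m}. cr j}"
  proof -
    have "E j \<and> \<not> E (Suc j) \<longleftrightarrow> cr j" if "j \<in> {1..<m}" for j
    proof -
      have "\<sigma> j \<noteq> j" "\<sigma> (Suc j) \<noteq> Suc j" using sd that by auto
      then show ?thesis by (auto simp: E_def cr_def)
    qed
    then show ?thesis by blast
  qed
  moreover have "{j\<in>{1..<m}. \<not> E j \<and> E (Suc j)} = {j\<in>{1..<m}. z j}"
  proof -
    have "\<not> E j \<and> E (Suc j) \<longleftrightarrow> z j" if "j \<in> {1..<m}" for j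
    proof -
      have "\<sigma> j \<noteq> j" "\<sigma> (Suc j) \<noteq> Suc j" using sd that by auto
      then show ?thesis by (auto simp: E_def z_def)
    qed
    then show ?thesis by blast
  qed
  ultimately have czc: "card {j\<in>{1..<m}. cr j} = card {j\<in>{1..<m}. z j} + 1" using tr by simp
  have sd3: "(\<Sum>j\<in>{1..<m}. ind (z j)) + 1 = xdes m \<sigma>"
    using sd2 czc by (simp add: ind_def sum_ind)
  have part: "ind (ds j) + ind (z j) + ind (\<not> ds j \<and> \<not> z j) = 1" for j
    by (auto simp: ind_def ds_def z_def)
  have "(\<Sum>j\<in>{1..<m}. ind (ds j)) + (\<Sum>j\<in>{1..<m}. ind (z j)) + (\<Sum>j\<in>{1..<m}. ind (\<not> ds j \<and> \<not> z j)) = m - 1"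
    using part by (simp add: sum.distrib[symmetric])
  then have sd4: "(\<Sum>j\<in>{1..<m}. ind (\<not> ds j \<and> \<not> z j)) = m - des m \<sigma> - xdes m \<sigma>"
    and le: "des m \<sigma> + xdes m \<sigma> \<le> m" using sd1 sd3 m1 by linarith+
  show "des m \<sigma> + xdes m \<sigma> \<le> m" by (rule le)
  have c1: "xdes m \<sigma> = Suc (\<Sum>j\<in>{1..<m}. ind (z j))" using sd3 by simp
  have mm: "m + 1 = Suc (Suc (m - 1))" using m1 by simp
  show "(\<Prod>j\<le>m. fj x y m \<sigma> j) = fps_const (x*y) ^ des m \<sigma> * Lx x ^ xdes m \<sigma> * Lx y ^ xdes m \<sigma>
            * Lx (x*y) ^ (m - des m \<sigma> - xdes m \<sigma>) * II ^ (m+1)"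
    unfolding P sd1 sd2 sd4 F_def c1 mm by (simp add: mult_ac)
qed


lemma derangements_0: "derangements 0 = {id}"
  by (auto simp: derangements_def perms_def)

lemma derangements_1: "derangements 1 = {}"
proof -
  have "\<sigma> 1 = 1" if "\<sigma> permutes {1..1}" for \<sigma> :: "nat \<Rightarrow> nat"
    using permutes_in_image[OF that, of 1] by simp
  then show ?thesis by (auto simp: derangements_def perms_def)
qed

lemma F_coeff_sum: "F_coeff n t s = (\<Sum>\<sigma>\<in>derangements n. t ^ des n \<sigma> * s ^ xdes n \<sigma>)"
proof -
  consider "n = 0" | "n = 1" | "n \<ge> 2" by linarith
  then show ?thesis
  proof cases
    case 1 then show ?thesis by (simp add: F_coeff_def derangements_0 des_def des_word_def xdes_def)
  next
    case 2 then show ?thesis using derangements_1 by (simp add: F_coeff_def)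
  qed (simp add: F_coeff_def)
qed

lemma II_mult_nth: "fps_nth (II * g) N = (\<Sum>i\<le>N. fps_nth g i)"
proof -
  have "fps_nth (II * g) N = (\<Sum>i=0..N. fps_nth g (N - i))" by (simp add: fps_mult_nth II_eq)
  also have "\<dots> = (\<Sum>i=0..N. fps_nth g i)" using sum.atLeastAtMost_rev[of "fps_nth g" 0 N] by simp
  finally show ?thesis by (simp add: atLeast0AtMost)
qed

lemma per_sigma:
  fixes x y :: real
  assumes \<sigma>: "\<sigma> \<in> derangements m"
  shows "II * (fps_const (x*y) * inverse (Lx (x*y))) ^ des m \<sigma>
           * (Lx x * Lx y * inverse (Lx (x*y))) ^ xdes m \<sigma>
           * (fps_X * (1 + fps_const (x*y) * fps_X * II)) ^ m
         = fps_X ^ m * (\<Prod>j\<le>m. fj x y m \<sigma> j)"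
proof (cases "m = 0")
  case True
  then have s: "\<sigma> = id" using \<sigma> derangements_0 by simp
  have "fj x y 0 id 0 = II" by (simp add: fj_gf ades_def adez_def II_gf)
  then show ?thesis using True s by (simp add: des_def des_word_def xdes_def)
next
  case False
  then have m1: "m \<ge> 1" by simp
  define d where "d = des m \<sigma>"
  define c where "c = xdes m \<sigma>"
  have dc: "d + c \<le> m" using prod_fj(2)[OF \<sigma> m1] by (simp add: d_def c_def)
  define K where "K = Lx (x*y)"
  define J where "J = inverse K"
  have KJ: "K * J = 1" unfolding J_def K_def by (rule inverse_mult_eq_1') (simp add: Lx_def)
  have W: "1 + fps_const (x*y) * fps_X * II = K * II"
  proof -
    have "K * II = (1 - fps_X) * II + fps_const (x*y) * fps_X * II" by (simp add: K_def Lx_def algebra_simps)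
    then show ?thesis using one_minus_II by simp
  qed
  have Km: "K ^ m = K ^ (m - d - c) * K ^ (d + c)" using dc by (simp add: power_add[symmetric])
  have KJ2: "K ^ (d + c) * J ^ (d + c) = 1" using KJ by (simp add: power_mult_distrib[symmetric])
  have "II * (fps_const (x*y) * J) ^ d * (Lx x * Lx y * J) ^ c * (fps_X * (1 + fps_const (x*y) * fps_X * II)) ^ m
      = fps_X ^ m * fps_const (x*y) ^ d * Lx x ^ c * Lx y ^ c * II ^ (m+1) * (K ^ m * J ^ (d + c))"
    unfolding W by (simp add: power_mult_distrib power_add mult_ac)
  also have "\<dots> = fps_X ^ m * (fps_const (x*y) ^ d * Lx x ^ c * Lx y ^ c * K ^ (m - d - c) * II ^ (m+1))
        * (K ^ (d + c) * J ^ (d + c))"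
    unfolding Km by (simp add: mult_ac)
  also have "\<dots> = fps_X ^ m * (\<Prod>j\<le>m. fj x y m \<sigma> j)"
    unfolding KJ2 prod_fj(1)[OF \<sigma> m1] by (simp add: d_def c_def K_def)
  finally show ?thesis unfolding J_def K_def d_def c_def .
qed


lemma finite_der: "finite (derangements m)"
proof -
  have "derangements m \<subseteq> {p. p permutes {1..m}}" by (auto simp: derangements_def perms_def)
  then show ?thesis using finite_permutations[of "{1..m}"] finite_subset by blast
qed

lemma sum_Dom: "(\<Sum>t\<in>Dom N. f t) = (\<Sum>m\<le>N. \<Sum>\<sigma>\<in>derangements m. \<Sum>X\<in>multisets_of_size {..m} (N-m). f (m,\<sigma>,X))"
proof -
  have "(\<Sum>t\<in>Dom N. f t) = (\<Sum>m\<le>N. \<Sum>p\<in>(SIGMA \<sigma>:derangements m. multisets_of_size {..m} (N - m)). f (m, p))"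
    unfolding Dom_def
    by (subst sum.Sigma) (auto simp: finite_der split_def intro!: finite_SigmaI)
  also have "\<dots> = (\<Sum>m\<le>N. \<Sum>\<sigma>\<in>derangements m. \<Sum>X\<in>multisets_of_size {..m} (N-m). f (m,\<sigma>,X))"
    by (intro sum.cong refl, subst sum.Sigma) (auto simp: finite_der split_def)
  finally show ?thesis .
qed

lemma G_nth: "fps_nth (G_fps x y) N = (\<Sum>\<pi>\<in>perms N. x ^ des N \<pi> * y ^ dez N \<pi>)"
proof (cases "N = 0")
  case True
  have "perms 0 = {id}" by (auto simp: perms_def)
  then show ?thesis using True by (simp add: G_fps_def des_def dez_def des_word_def)
qed (simp add: G_fps_def)

lemma fj_nth: "fps_nth (fj x y m \<sigma> j) k = x ^ ades m \<sigma> j k * y ^ adez m \<sigma> j k"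
  by (simp add: fj_def)

lemma swap_tri:
  fixes h :: "nat \<Rightarrow> nat \<Rightarrow> 'a::comm_monoid_add" and N :: nat
  assumes "\<And>n i. i < n \<Longrightarrow> h n i = 0"
  shows "(\<Sum>i\<le>N. \<Sum>n\<le>i. h n i) = (\<Sum>n\<le>N. \<Sum>i\<le>N. h n i)"
proof -
  have "(\<Sum>n\<le>i. h n i) = (\<Sum>n\<le>N. h n i)" if "i \<le> N" for i
  proof (rule sum.mono_neutral_left)
    show "{..i} \<subseteq> {..N}" using that by auto
    show "\<forall>n\<in>{..N} - {..i}. h n i = 0" using assms by auto
  qed simp
  then have "(\<Sum>i\<le>N. \<Sum>n\<le>i. h n i) = (\<Sum>i\<le>N. \<Sum>n\<le>N. h n i)" by simp
  also have "\<dots> = (\<Sum>n\<le>N. \<Sum>i\<le>N. h n i)" by (rule sum.swap)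
  finally show ?thesis .
qed

lemma main_coeff:
  fixes x y :: real
  defines "Tt \<equiv> fps_const (x*y) * inverse (Lx (x*y))"
      and "St \<equiv> Lx x * Lx y * inverse (Lx (x*y))"
      and "Wt \<equiv> fps_X * (1 + fps_const (x*y) * fps_X * II)"
  shows "fps_nth (II * F_subst Tt St Wt) N = (\<Sum>\<pi>\<in>perms N. x ^ des N \<pi> * y ^ dez N \<pi>)"
proof -
  define h where "h n i = fps_nth (F_coeff n Tt St * Wt ^ n) i" for n i
  have van: "h n i = 0" if "i < n" for n i
  proof -
    have eq: "F_coeff n Tt St * Wt ^ n = fps_X ^ n * (F_coeff n Tt St * (1 + fps_const (x*y) * fps_X * II) ^ n)"
      by (simp add: Wt_def power_mult_distrib mult_ac)
    show ?thesis unfolding h_def eq fps_X_power_mult_nth using that by simp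
  qed
  have "fps_nth (II * F_subst Tt St Wt) N = (\<Sum>i\<le>N. \<Sum>n\<le>i. h n i)"
    by (simp add: II_mult_nth F_subst_def fps_series_subst_def h_def)
  also have "\<dots> = (\<Sum>n\<le>N. \<Sum>i\<le>N. h n i)" by (rule swap_tri) (rule van)
  also have "\<dots> = (\<Sum>n\<le>N. \<Sum>\<sigma>\<in>derangements n. \<Sum>X\<in>multisets_of_size {..n} (N-n).
                     x ^ des N (infl n X \<sigma>) * y ^ dez N (infl n X \<sigma>))"
  proof (intro sum.cong refl)
    fix n assume n: "n \<in> {..N}"
    have "(\<Sum>i\<le>N. h n i) = fps_nth (II * (F_coeff n Tt St * Wt ^ n)) N"
      by (simp add: II_mult_nth h_def)
    also have "II * (F_coeff n Tt St * Wt ^ n) = (\<Sum>\<sigma>\<in>derangements n. II * Tt ^ des n \<sigma> * St ^ xdes n \<sigma> * Wt ^ n)"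
      by (simp add: F_coeff_sum sum_distrib_left sum_distrib_right mult_ac)
    also have "\<dots> = (\<Sum>\<sigma>\<in>derangements n. fps_X ^ n * (\<Prod>j\<le>n. fj x y n \<sigma> j))"
      unfolding Tt_def St_def Wt_def by (intro sum.cong refl) (rule per_sigma)
    also have "fps_nth \<dots> N = (\<Sum>\<sigma>\<in>derangements n. fps_nth (\<Prod>j\<le>n. fj x y n \<sigma> j) (N - n))"
      using n by (simp add: fps_sum_nth fps_X_power_mult_nth)
    also have "\<dots> = (\<Sum>\<sigma>\<in>derangements n. \<Sum>X\<in>multisets_of_size {..n} (N-n).
                     x ^ des N (infl n X \<sigma>) * y ^ dez N (infl n X \<sigma>))"
    proof (intro sum.cong refl)
      fix \<sigma> assume \<sigma>: "\<sigma> \<in> derangements n"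
      have "fps_nth (\<Prod>j\<le>n. fj x y n \<sigma> j) (N - n)
          = (\<Sum>X\<in>multisets_of_size {..n} (N-n). \<Prod>j\<le>n. fps_nth (fj x y n \<sigma> j) (count X j))"
        by (rule fps_prod_nth') simp
      also have "\<dots> = (\<Sum>X\<in>multisets_of_size {..n} (N-n). x ^ des N (infl n X \<sigma>) * y ^ dez N (infl n X \<sigma>))"
      proof (intro sum.cong refl)
        fix X assume X: "X \<in> multisets_of_size {..n} (N-n)"
        have I: "iset n X \<sigma>" using \<sigma> X by (auto simp: iset_def derangements_def perms_def multisets_of_size_def)
        have NN: "n + size X = N" using X n by (auto simp: multisets_of_size_def)
        show "(\<Prod>j\<le>n. fps_nth (fj x y n \<sigma> j) (count X j)) = x ^ des N (infl n X \<sigma>) * y ^ dez N (infl n X \<sigma>)"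
          using iset.weight[OF I, of x y] NN by (simp add: fj_nth)
      qed
      finally show "fps_nth (\<Prod>j\<le>n. fj x y n \<sigma> j) (N - n) = (\<Sum>X\<in>multisets_of_size {..n} (N-n).
                     x ^ des N (infl n X \<sigma>) * y ^ dez N (infl n X \<sigma>))" .
    qed
    finally show "(\<Sum>i\<le>N. h n i) = (\<Sum>\<sigma>\<in>derangements n. \<Sum>X\<in>multisets_of_size {..n} (N-n).
                     x ^ des N (infl n X \<sigma>) * y ^ dez N (infl n X \<sigma>))" .
  qed
  also have "\<dots> = (\<Sum>t\<in>Dom N. x ^ des N (Phi t) * y ^ dez N (Phi t))"
    by (simp add: sum_Dom Phi_def)
  also have "\<dots> = (\<Sum>\<pi>\<in>perms N. x ^ des N \<pi> * y ^ dez N \<pi>)"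
    by (rule sum.reindex_bij_betw[OF Phi_bij])
  finally show ?thesis .
qed

theorem theorem3p2:
  fixes x y :: real
  defines "u \<equiv> (fps_X :: real fps)"
  shows "G_fps x y =
    inverse (1 - u) *
    F_subst (fps_const (x * y) * inverse (1 - u + fps_const (x * y) * u))
            ((1 - u + fps_const x * u) * (1 - u + fps_const y * u)
               * inverse (1 - u + fps_const (x * y) * u))
            (u * (1 + fps_const (x * y) * u * inverse (1 - u)))"
proof (rule fps_ext)
  fix N
  show "fps_nth (G_fps x y) N = fps_nth (inverse (1 - u) *
    F_subst (fps_const (x * y) * inverse (1 - u + fps_const (x * y) * u))
            ((1 - u + fps_const x * u) * (1 - u + fps_const y * u)
               * inverse (1 - u + fps_const (x * y) * u))
            (u * (1 + fps_const (x * y) * u * inverse (1 - u)))) N"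
    using main_coeff[of x y N] G_nth[of x y N] unfolding u_def Lx_def by simp
qed


end
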